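(* Let $\alpha\in(\pi/8,3\pi/8)$ with $\alpha/\pi\notin\mathbb{Q}$, $\beta=\alpha-\pi/2$, $\rho=0.01$, $A_1=\rho R(\alpha)$, $A_2=\rho R(\beta)$ where $R(\theta)=\begin{bmatrix}\cos\theta&-\sin\theta\\ \sin\theta&\cos\theta\end{bmatrix}$, and $c(x)=x_1^2+2x_2^2$ on $\mathbb{R}^2$. Let $J^\star$ be the optimal value function, $\tilde J^\star(\theta)=J^\star([\cos\theta,\sin\theta]^\top)$, $\Delta\tilde J^\star(\theta)=\tilde J^\star(\theta+\alpha)-\tilde J^\star(\theta+\beta)$, $\mu=\pi/4-\alpha$, $\delta=0.01$, and let $\nu\in(\mu-\delta,\mu+\delta)$ satisfy $\Delta\tilde J^\star(\nu)=0$. Let $I=[\nu+\beta,\nu+\alpha)$ and $T:I\to I$ be defined by $T(\theta)=\theta+\alpha$ if $\theta<\nu$ and $T(\theta)=\theta+\beta$ if $\theta\geq\nu$. Then for every $\theta\in I$, the backward orbit $\{T^{-1}\theta,T^{-2}\theta,T^{-3}\theta,\ldots\}$ is dense in $I$.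
   Context: $T$ is a bijection of $I$ (an interval exchange map), so $T^{-k}$ is well defined. For the switched linear system $\xi(t+1)=A_{\sigma(t)}\xi(t)$ with $\sigma:\mathbb{N}\to\{1,2\}$, $J^\star(x)=\inf_\sigma\sum_{t=0}^\infty c(\xi(t,x,\sigma))$ where $\xi(t,x,\sigma)$ is the solution with $\xi(0)=x$. *)

theory Defs
  imports "HOL-Analysis.Analysis"
begin

definition rot :: "real \<Rightarrow> real^2^2" where
  "rot \<theta> = vector [vector [cos \<theta>, - sin \<theta>], vector [sin \<theta>, cos \<theta>]]"

primrec traj :: "(nat \<Rightarrow> real^2^2) \<Rightarrow> (nat \<Rightarrow> nat) \<Rightarrow> real^2 \<Rightarrow> nat \<Rightarrow> real^2" where
  "traj A \<sigma> x 0 = x"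
| "traj A \<sigma> x (Suc t) = A (\<sigma> t) *v traj A \<sigma> x t"

definition Jstar :: "(nat \<Rightarrow> real^2^2) \<Rightarrow> (real^2 \<Rightarrow> real) \<Rightarrow> real^2 \<Rightarrow> ereal" where
  "Jstar A c x = (INF \<sigma> \<in> {\<sigma>. \<forall>t. \<sigma> t \<in> {1,2}}. (\<Sum>t. ereal (c (traj A \<sigma> x t))))"

end

theory Submission
  imports Defs
begin

theorem lemma9:
  fixes \<alpha> \<beta> \<rho> \<mu> \<delta> \<nu> :: real
    and A :: "nat \<Rightarrow> real^2^2"
    and c :: "real^2 \<Rightarrow> real"
    and Jt :: "real \<Rightarrow> ereal"
    and T :: "real \<Rightarrow> real"
    and I :: "real set"
  assumes "pi / 8 < \<alpha>" "\<alpha> < 3 * pi / 8"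
    and "\<alpha> / pi \<notin> \<rat>"
    and "\<beta> = \<alpha> - pi / 2"
    and "\<rho> = 0.01"
    and "A 1 = \<rho> *\<^sub>R rot \<alpha>" "A 2 = \<rho> *\<^sub>R rot \<beta>"
    and "\<And>x. c x = (x $ 1)\<^sup>2 + 2 * (x $ 2)\<^sup>2"
    and "\<And>\<theta>. Jt \<theta> = Jstar A c (vector [cos \<theta>, sin \<theta>])"
    and "\<mu> = pi / 4 - \<alpha>"
    and "\<delta> = 0.01"
    and "\<mu> - \<delta> < \<nu>" "\<nu> < \<mu> + \<delta>"
    and "Jt (\<nu> + \<alpha>) - Jt (\<nu> + \<beta>) = 0"
    and "I = {\<nu> + \<beta> ..< \<nu> + \<alpha>}"
    and "\<And>\<theta>. T \<theta> = (if \<theta> < \<nu> then \<theta> + \<alpha> else \<theta> + \<beta>)"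
  shows "\<forall>\<theta>\<in>I. I \<subseteq> closure {((inv_into I T) ^^ k) \<theta> | k. k \<ge> 1}"
proof -
  define L where "L = pi / 2"
  have Lpos: "L > 0" unfolding L_def by simp
  have apos: "\<alpha> > 0" using assms(1) pi_gt_zero by linarith
  have aL: "\<alpha> < L" using assms(2) pi_gt_zero unfolding L_def by linarith
  have bdef: "\<beta> = \<alpha> - L" using assms(4) L_def by simp
  have Ieq: "I = {\<nu> + \<alpha> - L ..< \<nu> + \<alpha>}" using assms(15) bdef by (simp add: algebra_simps)
  have Tdef: "\<And>x. T x = (if x < \<nu> then x + \<alpha> else x + \<alpha> - L)" using assms(16) bdef by (simp add: algebra_simps)
  have inj: "inj_on T I"
  proof (rule inj_onI)
    fix a b assume "a \<in> I" "b \<in> I" "T a = T b"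
    then show "a = b" unfolding Ieq Tdef by (auto split: if_splits)
  qed
  define S where "S = inv_into I T"
  have step: "S y \<in> I \<and> (\<exists>m::int. S y = y - \<alpha> + of_int m * L)" if "y \<in> I" for y
  proof (cases "y - \<alpha> \<ge> \<nu> + \<alpha> - L")
    case True
    have z: "y - \<alpha> \<in> I" "T (y - \<alpha>) = y" using True that aL apos unfolding Ieq Tdef by auto
    have "S y = y - \<alpha>" unfolding S_def using inv_into_f_eq[OF inj z] .
    then show ?thesis using z by (metis add.right_neutral mult_zero_left of_int_0)
  next
    case False
    have z: "y - \<alpha> + L \<in> I" "T (y - \<alpha> + L) = y" using False that aL apos unfolding Ieq Tdef by auto
    have "S y = y - \<alpha> + L" unfolding S_def using inv_into_f_eq[OF inj z] .
    then show ?thesis using z by (metis mult_1 of_int_1)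
  qed
  have iter: "(S ^^ k) x \<in> I \<and> (\<exists>m::int. (S ^^ k) x = x - real k * \<alpha> + of_int m * L)"
    if "x \<in> I" for x k
  proof (induction k)
    case 0
    then show ?case using that by (auto intro: exI[of _ 0])
  next
    case (Suc k)
    then obtain m where m: "(S ^^ k) x \<in> I" "(S ^^ k) x = x - real k * \<alpha> + of_int m * L" by blast
    then obtain m' where m': "S ((S ^^ k) x) \<in> I" "S ((S ^^ k) x) = (S ^^ k) x - \<alpha> + of_int m' * L"
      using step by blast
    have e1: "(S ^^ Suc k) x = x - real (Suc k) * \<alpha> + of_int (m + m') * L"
      using m m' by (simp add: algebra_simps)
    have e2: "(S ^^ Suc k) x = S ((S ^^ k) x)" by simp
    show ?case
    proof (intro conjI exI)
      show "(S ^^ Suc k) x \<in> I" using e2 m'(1) by simp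
      show "(S ^^ Suc k) x = x - real (Suc k) * \<alpha> + of_int (m + m') * L" by (rule e1)
    qed
  qed
  have uniq: "p = q" if "p \<in> I" "q \<in> I" "p = q + of_int m * L" for p q and m :: int
  proof -
    have "\<bar>of_int m * L\<bar> < L" using that unfolding Ieq by auto
    then have "\<bar>of_int m\<bar> < (1::real)" using Lpos by (simp add: abs_mult)
    then have "m = 0" by linarith
    then show ?thesis using that by simp
  qed
  have irr: "- \<alpha> / L \<notin> \<rat>"
  proof
    assume "- \<alpha> / L \<in> \<rat>"
    then have "(- \<alpha> / L) * (- 1 / 2) \<in> \<rat>" by (intro Rats_mult) auto
    moreover have "(- \<alpha> / L) * (- 1 / 2) = \<alpha> / pi" unfolding L_def by (simp add: field_simps)
    ultimately show False using assms(3) by metis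
  qed
  show ?thesis
  proof (intro ballI subsetI)
    fix x t assume x: "x \<in> I" and t: "t \<in> I"
    show "t \<in> closure {((inv_into I T) ^^ k) x | k. k \<ge> 1}"
      unfolding closure_approachable S_def[symmetric]
    proof (intro allI impI)
      fix e :: real assume e: "e > 0"
      define s where "s = min e (\<nu> + \<alpha> - t) / 2"
      have s: "s > 0" "s \<le> e / 2" "t + 2 * s \<le> \<nu> + \<alpha>" using e t unfolding s_def Ieq by auto
      define t' where "t' = t + s"
      obtain h k :: int where hk: "k > 0" "\<bar>of_int k * (- \<alpha> / L) - of_int h - (t' - x) / L\<bar> < s / L"
      proof -
        have "s / L > 0" using s Lpos by simp
        from sequence_of_fractional_parts_is_dense[OF irr this, of "(t' - x) / L"]
        show ?thesis using that by blast
      qed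
      define p where "p = x - of_int k * \<alpha> - of_int h * L"
      have "\<bar>(of_int k * (- \<alpha> / L) - of_int h - (t' - x) / L) * L\<bar> < s"
        using hk(2) Lpos by (simp add: abs_mult pos_less_divide_eq)
      moreover have "(of_int k * (- \<alpha> / L) - of_int h - (t' - x) / L) * L = p - t'"
        unfolding p_def using Lpos by (simp add: field_simps)
      ultimately have pt: "\<bar>p - t'\<bar> < s" by simp
      have pI: "p \<in> I" using pt s t unfolding t'_def Ieq by auto
      obtain m :: int where m: "(S ^^ nat k) x \<in> I" "(S ^^ nat k) x = x - real (nat k) * \<alpha> + of_int m * L"
        using iter[OF x] by blast
      have "p = (S ^^ nat k) x + of_int (- h - m) * L"
        unfolding p_def using m(2) hk(1) by (simp add: algebra_simps)
      then have "p = (S ^^ nat k) x" using uniq[OF pI m(1)] by blast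
      moreover have "dist p t < e" using pt s unfolding t'_def dist_real_def by auto
      moreover have "nat k \<ge> 1" using hk(1) by simp
      ultimately show "\<exists>y\<in>{(S ^^ k) x |k. 1 \<le> k}. dist y t < e" by blast
    qed
  qed
qed

end
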